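(* Let $G=(V,E)$ be a unit-weight graph, let $\mathrm{DS}$ be a dominating set of $G$, and let $\mathrm{IS}$ be an arbitrary maximal independent set of the subgraph of $G$ induced by $V\setminus\mathrm{DS}$. Then $\mathrm{Cut}(\mathrm{IS},V\setminus\mathrm{IS})\ge|V|-|\mathrm{DS}|$.
   Context: For a unit-weight graph, $W$ is the symmetric $\{0,1\}$ matrix with $W_{v,v}=1$ and $W_{u,v}=1$ iff $\{u,v\}\in E$. For $S\subseteq V$, $\mathrm{Cut}(S,V\setminus S)=\sum_{u\in S}\sum_{v\in V\setminus S}W_{u,v}$, i.e., the number of edges between $S$ and $V\setminus S$. A dominating set is a set $D$ such that every vertex not in $D$ has a neighbor in $D$. *)

theory Defs
  imports Main
begin

definition simple_graph :: "'a set \<Rightarrow> 'a set set \<Rightarrow> bool" where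
  "simple_graph V E \<longleftrightarrow> finite V \<and>
     (\<forall>e\<in>E. \<exists>u v. e = {u, v} \<and> u \<noteq> v \<and> u \<in> V \<and> v \<in> V)"

definition W :: "'a set set \<Rightarrow> 'a \<Rightarrow> 'a \<Rightarrow> nat" where
  "W E u v = (if u = v \<or> {u, v} \<in> E then 1 else 0)"

definition Cut :: "'a set set \<Rightarrow> 'a set \<Rightarrow> 'a set \<Rightarrow> nat" where
  "Cut E S T = (\<Sum>u\<in>S. \<Sum>v\<in>T. W E u v)"

definition dominating_set :: "'a set \<Rightarrow> 'a set set \<Rightarrow> 'a set \<Rightarrow> bool" where
  "dominating_set V E D \<longleftrightarrow> D \<subseteq> V \<and> (\<forall>v\<in>V - D. \<exists>u\<in>D. {u, v} \<in> E)"

definition independent_in :: "'a set \<Rightarrow> 'a set set \<Rightarrow> 'a set \<Rightarrow> bool" where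
  "independent_in U E I \<longleftrightarrow> I \<subseteq> U \<and> (\<forall>u\<in>I. \<forall>v\<in>I. {u, v} \<notin> E)"

definition maximal_independent_in :: "'a set \<Rightarrow> 'a set set \<Rightarrow> 'a set \<Rightarrow> bool" where
  "maximal_independent_in U E I \<longleftrightarrow> independent_in U E I \<and>
     (\<forall>J. independent_in U E J \<and> I \<subseteq> J \<longrightarrow> J = I)"

end

theory Submission
  imports Defs
begin

theorem lemma5p1:
  fixes V :: "'a set" and E :: "'a set set" and DS IS :: "'a set"
  assumes "simple_graph V E"
    and "dominating_set V E DS"
    and "maximal_independent_in (V - DS) E IS"
  shows "Cut E IS (V - IS) \<ge> card V - card DS"
proof -
  have fV: "finite V" using assms(1) by (simp add: simple_graph_def)
  have DSV: "DS \<subseteq> V" and dom: "\<forall>v\<in>V - DS. \<exists>u\<in>DS. {u, v} \<in> E"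
    using assms(2) by (auto simp: dominating_set_def)
  have ISsub: "IS \<subseteq> V - DS" and indep: "\<forall>u\<in>IS. \<forall>v\<in>IS. {u, v} \<notin> E"
    and maxi: "\<And>J. independent_in (V - DS) E J \<Longrightarrow> IS \<subseteq> J \<Longrightarrow> J = IS"
    using assms(3) by (auto simp: maximal_independent_in_def independent_in_def)
  have noloop: "{x} \<notin> E" for x
  proof
    assume "{x} \<in> E"
    then obtain u v where "{x} = {u,v}" "u \<noteq> v" using assms(1) unfolding simple_graph_def by blast
    thus False by (metis doubleton_eq_iff insert_absorb2)
  qed
  have nb: "\<exists>u\<in>IS. {u, w} \<in> E" if w: "w \<in> V - DS - IS" for w
  proof (rule ccontr)
    assume nn: "\<not> ?thesis"
    have "independent_in (V - DS) E (insert w IS)"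
      unfolding independent_in_def using ISsub indep w nn noloop
      by (auto simp: insert_commute)
    hence "insert w IS = IS" using maxi by blast
    thus False using w by blast
  qed
  define P where "P = {(u,v). u \<in> IS \<and> v \<in> V - IS \<and> {u,v} \<in> E}"
  have fP: "finite P" unfolding P_def
    by (rule finite_subset[of _ "V \<times> V"]) (use fV ISsub in auto)
  have "Cut E IS (V - IS) = (\<Sum>p\<in>IS \<times> (V - IS). W E (fst p) (snd p))"
    unfolding Cut_def by (simp add: sum.cartesian_product case_prod_beta)
  also have "\<dots> = (\<Sum>p\<in>IS \<times> (V - IS). if p \<in> P then 1 else 0)"
    by (rule sum.cong) (auto simp: W_def P_def)
  also have "\<dots> = card P"
  proof -
    have fin: "finite (IS \<times> (V - IS))" using fV ISsub
      by (meson finite_Diff finite_SigmaI finite_subset Diff_subset order_trans)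
    have "P \<subseteq> IS \<times> (V - IS)" unfolding P_def by auto
    thus ?thesis using fin by (simp add: sum.If_cases Int_absorb1)
  qed
  finally have cutP: "Cut E IS (V - IS) = card P" .
  define f where "f w = (if w \<in> IS then (w, SOME d. d \<in> DS \<and> {d, w} \<in> E)
                         else (SOME u. u \<in> IS \<and> {u, w} \<in> E, w))" for w
  have fmap: "f w \<in> P \<and> (w \<in> IS \<longrightarrow> fst (f w) = w \<and> snd (f w) \<in> DS)
              \<and> (w \<notin> IS \<longrightarrow> snd (f w) = w)" if w: "w \<in> V - DS" for w
  proof (cases "w \<in> IS")
    case True
    then obtain d where "d \<in> DS" "{d, w} \<in> E" using dom w by blast
    hence "(SOME d. d \<in> DS \<and> {d, w} \<in> E) \<in> DS \<and> {SOME d. d \<in> DS \<and> {d, w} \<in> E, w} \<in> E"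
      by (metis (mono_tags, lifting) someI)
    then show ?thesis using True DSV ISsub unfolding f_def P_def
      by (auto simp: insert_commute)
  next
    case False
    then obtain u where "u \<in> IS" "{u, w} \<in> E" using nb w by blast
    hence "(SOME u. u \<in> IS \<and> {u, w} \<in> E) \<in> IS \<and> {SOME u. u \<in> IS \<and> {u, w} \<in> E, w} \<in> E"
      by (metis (mono_tags, lifting) someI)
    then show ?thesis using False w unfolding f_def P_def by auto
  qed
  have inj: "inj_on f (V - DS)"
  proof (rule inj_onI)
    fix x y assume x: "x \<in> V - DS" and y: "y \<in> V - DS" and e: "f x = f y"
    have fx: "(x \<in> IS \<longrightarrow> fst (f x) = x \<and> snd (f x) \<in> DS) \<and> (x \<notin> IS \<longrightarrow> snd (f x) = x)"
      using fmap[OF x] by blast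
    have fy: "(y \<in> IS \<longrightarrow> fst (f y) = y \<and> snd (f y) \<in> DS) \<and> (y \<notin> IS \<longrightarrow> snd (f y) = y)"
      using fmap[OF y] by blast
    show "x = y"
    proof (cases "x \<in> IS")
      case True
      show ?thesis
      proof (cases "y \<in> IS")
        case True
        then show ?thesis using \<open>x \<in> IS\<close> fx fy e by metis
      next
        case False
        then have "snd (f y) = y" using fy by blast
        moreover have "snd (f x) \<in> DS" using True fx by blast
        ultimately show ?thesis using e y by simp
      qed
    next
      case False
      then have sx: "snd (f x) = x" using fx by blast
      show ?thesis
      proof (cases "y \<in> IS")
        case True
        then have "snd (f y) \<in> DS" using fy by blast
        then show ?thesis using e x sx by simp
      next
        case False
        then show ?thesis using sx fy e by metis
      qed
    qed
  qed
  have "card (V - DS) \<le> card P"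
    by (rule card_inj_on_le[OF inj _ fP]) (use fmap in blast)
  moreover have "card (V - DS) = card V - card DS"
    using card_Diff_subset[OF finite_subset[OF DSV fV] DSV] by simp
  ultimately show ?thesis using cutP by simp
qed

end
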